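(* For every $r\in\mathbb{N}$ there exist moulds ${}_r\mathrm{Poin}^\bullet$ on $\mathcal{A}(F)$ and ${}_r\mathrm{poin}^\bullet$ on $A(F)$ such that $$F^r_{\rm Poin}=F_{\rm lin}\Big(\sum_{\mathbf{m}}{}_r\mathrm{Poin}^{\mathbf{m}}D_{\mathbf{m}}\Big)=F_{\rm lin}\Big(\sum_{\mathbf{n}}{}_r\mathrm{poin}^{\mathbf{n}}B_{\mathbf{n}}\Big).$$
   Context: Fix $\nu\ge1$, $\lambda\in\mathbb{C}^\nu$, $\lambda\cdot m=\sum_i\lambda_im_i$, $|m|=m_1+\dots+m_\nu$. Let $f(x)=(e^{\lambda_1}x_1,\dots,e^{\lambda_\nu}x_\nu)+h(x)$ be a local analytic diffeomorphism of $(\mathbb{C}^\nu,0)$, $F(\varphi)=\varphi\circ f$ on $\mathbb{C}[[x]]$, $F_{\rm lin}(x^m)=e^{\lambda\cdot m}x^m$. An operator is homogeneous of degree $n\in\mathbb{Z}^\nu$ if it maps each $x^k$ to a multiple of $x^{k+n}$. Write $F=F_{\rm lin}(\mathrm{Id}+\sum_{n\in A(F)}B_n)=F_{\rm lin}\exp(\sum_{m\in\mathcal{A}(F)}D_m)$ with $B_n$ homogeneous of degree $n$ and $D_m$ homogeneous derivations of degree $m$; $A(F),\mathcal{A}(F)\subset\mathbb{Z}^\nu$ are taken closed under addition (degrees with zero operator allowed). Words: $B_{\mathbf{n}}=B_{n_1}\circ\cdots\circ B_{n_r}$, $D_{\mathbf{m}}$ likewise, identity on the empty word; moulds are complex-valued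 functions on words; sums are formal. Poincaré normal form up to order $r$: $F^0_{\rm Poin}=F$; given $F^{i-1}_{\rm Poin}=F_{\rm lin}\exp(\sum_m{}_iD_m)$ with ${}_iD_m$ its homogeneous derivation components of degree $m$, let $N^{(i)}_k=\{m:{}_iD_m\neq0,\ |m|=k,\ e^{\lambda\cdot m}\neq1\}$, $K_i=\min\{k\ge1:N^{(i)}_k\neq\emptyset\}$, $\mathbf{S}_i=\sum_{m\in N^{(i)}_{K_i}}{}_iD_m/(1-e^{\lambda\cdot m})$, and $F^i_{\rm Poin}=\exp(\mathbf{S}_i)\circ F^{i-1}_{\rm Poin}\circ\exp(-\mathbf{S}_i)$. *)

theory Defs
  imports "HOL-Analysis.Analysis"
begin

(* The index type 'i (finite) plays the role of {1..nu}; nu = CARD('i).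
   Degrees (elements of Z^nu)                : 'i => int.
   Formal power series in C[[x]]              : coefficient functions.
   Operators on C[[x]] are represented by their matrices on monomials:
   T k k' = coefficient of x^k' in T(x^k).                                  *)

type_synonym 'i mon = "'i \<Rightarrow> nat"
type_synonym 'i deg = "'i \<Rightarrow> int"
type_synonym 'i ser = "'i mon \<Rightarrow> complex"
type_synonym 'i op  = "'i mon \<Rightarrow> 'i mon \<Rightarrow> complex"

definition mdeg :: "'i::finite mon \<Rightarrow> nat" where
  "mdeg k = (\<Sum>j\<in>UNIV. k j)"

definition zdeg :: "'i::finite deg \<Rightarrow> int" where
  "zdeg m = (\<Sum>j\<in>UNIV. m j)"

definition ldot :: "('i::finite \<Rightarrow> complex) \<Rightarrow> 'i deg \<Rightarrow> complex" where
  "ldot lam m = (\<Sum>j\<in>UNIV. lam j * of_int (m j))"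

definition zmon :: "'i mon \<Rightarrow> 'i deg" where
  "zmon k = (\<lambda>j. int (k j))"

definition is_step :: "'i mon \<Rightarrow> 'i deg \<Rightarrow> 'i mon \<Rightarrow> bool" where
  "is_step k n k' \<longleftrightarrow> (\<forall>j. int (k' j) = int (k j) + n j)"

definition unitmon :: "'i \<Rightarrow> 'i mon" where
  "unitmon j = (\<lambda>i. if i = j then 1 else 0)"

definition fser :: "('i \<Rightarrow> complex) \<Rightarrow> ('i \<Rightarrow> 'i ser) \<Rightarrow> 'i \<Rightarrow> 'i ser" where
  "fser lam h j = (\<lambda>p. (if p = unitmon j then exp (lam j) else 0) + h j p)"

(* F(phi) = phi o f : its matrix.  F(x^k) = prod_j f_j^(k_j); the coefficient of
   x^k' is the sum over all ways of choosing one monomial c(j,t) from each of the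
   k_j copies of f_j (t < k_j) such that the chosen exponents add up to k'. *)
definition comp_op :: "('i::finite \<Rightarrow> 'i ser) \<Rightarrow> 'i op" where
  "comp_op f k k' =
     (\<Sum>c \<in> {c. c \<in> (SIGMA j:UNIV. {..<k j}) \<rightarrow>\<^sub>E {p. p \<le> k'} \<and>
                (\<forall>i. (\<Sum>q\<in>(SIGMA j:UNIV. {..<k j}). c q i) = k' i)}.
        \<Prod>q\<in>(SIGMA j:UNIV. {..<k j}). f (fst q) (c q))"

definition Fop :: "('i::finite \<Rightarrow> complex) \<Rightarrow> ('i \<Rightarrow> 'i ser) \<Rightarrow> 'i op" where
  "Fop lam h = comp_op (fser lam h)"

definition op_id :: "'i op" where
  "op_id k k' = (if k = k' then 1 else 0)"

definition op_zero :: "'i op" where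
  "op_zero = (\<lambda>_ _. 0)"

(* op_comp A B = A o B  (B applied first); formal (entrywise) sum *)
definition op_comp :: "'i op \<Rightarrow> 'i op \<Rightarrow> 'i op" where
  "op_comp A B k k' = (\<Sum>\<^sub>\<infinity>k''. B k k'' * A k'' k')"

definition op_pow :: "'i op \<Rightarrow> nat \<Rightarrow> 'i op" where
  "op_pow A r = (op_comp A ^^ r) op_id"

definition op_exp :: "'i op \<Rightarrow> 'i op" where
  "op_exp S k k' = (\<Sum>\<^sub>\<infinity>r::nat. op_pow S r k k' / fact r)"

definition op_log1p :: "'i op \<Rightarrow> 'i op" where
  "op_log1p N k k' = (\<Sum>\<^sub>\<infinity>r\<in>{1::nat..}. (-1)^(r+1) / of_nat r * op_pow N r k k')"

definition Flin :: "('i::finite \<Rightarrow> complex) \<Rightarrow> 'i op" where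
  "Flin lam k k' = (if k = k' then exp (ldot lam (zmon k)) else 0)"

definition Flin_inv :: "('i::finite \<Rightarrow> complex) \<Rightarrow> 'i op" where
  "Flin_inv lam k k' = (if k = k' then exp (- ldot lam (zmon k)) else 0)"

definition hom_comp :: "'i op \<Rightarrow> 'i deg \<Rightarrow> 'i op" where
  "hom_comp T n k k' = (if is_step k n k' then T k k' else 0)"

definition nilpart :: "('i::finite \<Rightarrow> complex) \<Rightarrow> 'i op \<Rightarrow> 'i op" where
  "nilpart lam T k k' = op_comp (Flin_inv lam) T k k' - op_id k k'"

(* T = F_lin (Id + sum_n B_n) *)
definition Bcomp :: "('i::finite \<Rightarrow> complex) \<Rightarrow> 'i op \<Rightarrow> 'i deg \<Rightarrow> 'i op" where
  "Bcomp lam T n = hom_comp (nilpart lam T) n"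

(* T = F_lin exp (sum_m D_m) *)
definition Dcomp :: "('i::finite \<Rightarrow> complex) \<Rightarrow> 'i op \<Rightarrow> 'i deg \<Rightarrow> 'i op" where
  "Dcomp lam T m = hom_comp (op_log1p (nilpart lam T)) m"

definition Nset :: "('i::finite \<Rightarrow> complex) \<Rightarrow> 'i op \<Rightarrow> nat \<Rightarrow> 'i deg set" where
  "Nset lam T k = {m. Dcomp lam T m \<noteq> op_zero \<and> zdeg m = int k \<and> exp (ldot lam m) \<noteq> 1}"

(* S_i (taken to be 0 if no non-resonant component is left) *)
definition Sgen :: "('i::finite \<Rightarrow> complex) \<Rightarrow> 'i op \<Rightarrow> 'i op" where
  "Sgen lam T =
     (if \<exists>k\<ge>1. Nset lam T k \<noteq> {} then
        (let K = (LEAST k. 1 \<le> k \<and> Nset lam T k \<noteq> {}) in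
          (\<lambda>k k'. \<Sum>\<^sub>\<infinity>m\<in>Nset lam T K. Dcomp lam T m k k' / (1 - exp (ldot lam m))))
      else op_zero)"

primrec poin_iter :: "('i::finite \<Rightarrow> complex) \<Rightarrow> 'i op \<Rightarrow> nat \<Rightarrow> 'i op" where
  "poin_iter lam T 0 = T"
| "poin_iter lam T (Suc i) =
     op_comp (op_exp (Sgen lam (poin_iter lam T i)))
       (op_comp (poin_iter lam T i) (op_exp (\<lambda>k k'. - Sgen lam (poin_iter lam T i) k k')))"

inductive_set add_closure :: "'i deg set \<Rightarrow> 'i deg set" for S where
  base: "m \<in> S \<Longrightarrow> m \<in> add_closure S"
| add: "m \<in> add_closure S \<Longrightarrow> n \<in> add_closure S \<Longrightarrow> (\<lambda>j. m j + n j) \<in> add_closure S"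

definition Aset :: "('i::finite \<Rightarrow> complex) \<Rightarrow> 'i op \<Rightarrow> 'i deg set" where
  "Aset lam T = add_closure {n. Bcomp lam T n \<noteq> op_zero}"

definition calAset :: "('i::finite \<Rightarrow> complex) \<Rightarrow> 'i op \<Rightarrow> 'i deg set" where
  "calAset lam T = add_closure {m. Dcomp lam T m \<noteq> op_zero}"

definition word_op :: "('i deg \<Rightarrow> 'i op) \<Rightarrow> 'i deg list \<Rightarrow> 'i op" where
  "word_op C w = foldr (\<lambda>n acc. op_comp (C n) acc) w op_id"

definition mould_expands ::
  "('i::finite \<Rightarrow> complex) \<Rightarrow> 'i op \<Rightarrow> ('i deg \<Rightarrow> 'i op) \<Rightarrow> 'i deg set \<Rightarrow> ('i deg list \<Rightarrow> complex) \<Rightarrow> bool" where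
  "mould_expands lam T C A M \<longleftrightarrow>
     (\<forall>k k'. ((\<lambda>w. exp (ldot lam (zmon k')) * (M w * word_op C w k k')) has_sum T k k') (lists A))"

end

theory Submission
  imports Defs "HOL-Computational_Algebra.Formal_Power_Series"
begin


definition Bd :: "nat \<Rightarrow> 'i::finite mon set" where
  "Bd d = {k. mdeg k \<le> d}"

lemma le_mdeg: "k j \<le> mdeg (k::'i::finite mon)"
  unfolding mdeg_def by (rule member_le_sum) auto

lemma finite_Bd: "finite (Bd d :: 'i::finite mon set)"
proof -
  have "Bd d \<subseteq> PiE UNIV (\<lambda>_. {..d})"
    unfolding Bd_def PiE_UNIV_domain using le_mdeg order_trans by fastforce
  moreover have "finite (PiE (UNIV::'i set) (\<lambda>_. {..d}))" by (intro finite_PiE) auto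
  ultimately show ?thesis by (rule finite_subset)
qed

lemma infsum_fin:
  fixes f :: "'a \<Rightarrow> complex"
  assumes "finite B" "B \<subseteq> A" "\<And>x. x \<in> A - B \<Longrightarrow> f x = 0"
  shows "infsum f A = sum f B"
  using has_sum_finite_neutralI[OF assms refl] by (rule infsumI)

definition upper :: "'i::finite op \<Rightarrow> bool" where
  "upper X \<longleftrightarrow> (\<forall>k k'. X k k' \<noteq> 0 \<longrightarrow> mdeg k \<le> mdeg k')"

definition supper :: "'i::finite op \<Rightarrow> bool" where
  "supper X \<longleftrightarrow> (\<forall>k k'. X k k' \<noteq> 0 \<longrightarrow> mdeg k < mdeg k')"

lemma supper_upper: "supper X \<Longrightarrow> upper X"
  unfolding supper_def upper_def by (meson less_imp_le)

lemma comp_fin: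
  assumes "upper A"
  shows "op_comp A B k k' = (\<Sum>k''\<in>Bd (mdeg k'). B k k'' * A k'' k')"
  unfolding op_comp_def
  by (rule infsum_fin) (use finite_Bd assms in \<open>auto simp: upper_def Bd_def\<close>)

lemma infsum_nonzero:
  fixes f :: "'a \<Rightarrow> complex"
  assumes "infsum f A \<noteq> 0" shows "\<exists>x\<in>A. f x \<noteq> 0"
proof (rule ccontr)
  assume "\<not> (\<exists>x\<in>A. f x \<noteq> 0)"
  then have "infsum f A = 0" by (intro infsum_0) auto
  with assms show False by simp
qed

lemma comp_nonzero:
  assumes "op_comp A B k k' \<noteq> 0" shows "\<exists>k''. B k k'' \<noteq> 0 \<and> A k'' k' \<noteq> 0"
proof -
  obtain x where "B k x * A x k' \<noteq> 0"
    using infsum_nonzero[OF assms[unfolded op_comp_def]] by blast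
  then show ?thesis by auto
qed

lemma upper_comp: "upper A \<Longrightarrow> upper B \<Longrightarrow> upper (op_comp A B)"
  unfolding upper_def
proof (intro allI impI)
  fix k k' assume "\<forall>k k'. A k k' \<noteq> 0 \<longrightarrow> mdeg k \<le> mdeg k'" "\<forall>k k'. B k k' \<noteq> 0 \<longrightarrow> mdeg k \<le> mdeg k'"
    "op_comp A B k k' \<noteq> 0"
  then show "mdeg k \<le> mdeg k'" using comp_nonzero[of A B k k'] le_trans by blast
qed

lemma supper_comp1: "supper A \<Longrightarrow> upper B \<Longrightarrow> supper (op_comp A B)"
  unfolding upper_def supper_def
proof (intro allI impI)
  fix k k' assume "\<forall>k k'. A k k' \<noteq> 0 \<longrightarrow> mdeg k < mdeg k'" "\<forall>k k'. B k k' \<noteq> 0 \<longrightarrow> mdeg k \<le> mdeg k'"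
    "op_comp A B k k' \<noteq> 0"
  then show "mdeg k < mdeg k'" using comp_nonzero[of A B k k'] le_less_trans by blast
qed

lemma comp_id_right: "op_comp A op_id = A"
proof (intro ext)
  fix k k'
  have "op_comp A op_id k k' = (\<Sum>k''\<in>{k}. op_id k k'' * A k'' k')"
    unfolding op_comp_def by (rule infsum_fin) (auto simp: op_id_def)
  then show "op_comp A op_id k k' = A k k'" by (simp add: op_id_def)
qed

lemma comp_id_left: "op_comp op_id A = A"
proof (intro ext)
  fix k k'
  have "op_comp op_id A k k' = (\<Sum>k''\<in>{k'}. A k k'' * op_id k'' k')"
    unfolding op_comp_def by (rule infsum_fin) (auto simp: op_id_def)
  then show "op_comp op_id A k k' = A k k'" by (simp add: op_id_def)
qed

lemma comp_zero_left: "op_comp op_zero A = op_zero"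
  unfolding op_comp_def op_zero_def by simp

lemma comp_zero_right: "op_comp A op_zero = op_zero"
  unfolding op_comp_def op_zero_def by simp

lemma comp_assoc:
  fixes A B C :: "'i::finite op"
  assumes "upper A" "upper B"
  shows "op_comp (op_comp A B) C = op_comp A (op_comp B C)"
proof (intro ext)
  fix k k'
  have uAB: "upper (op_comp A B)" using assms upper_comp by blast
  have "op_comp (op_comp A B) C k k' = (\<Sum>a\<in>Bd (mdeg k'). C k a * (\<Sum>b\<in>Bd (mdeg k'). B a b * A b k'))"
    unfolding comp_fin[OF uAB] comp_fin[OF assms(1)] ..
  also have "\<dots> = (\<Sum>a\<in>Bd (mdeg k'). \<Sum>b\<in>Bd (mdeg k'). C k a * B a b * A b k')"
    by (simp add: sum_distrib_left mult.assoc)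
  also have "\<dots> = (\<Sum>b\<in>Bd (mdeg k'). \<Sum>a\<in>Bd (mdeg k'). C k a * B a b * A b k')"
    by (rule sum.swap)
  also have "\<dots> = (\<Sum>b\<in>Bd (mdeg k'). (\<Sum>a\<in>Bd (mdeg b). C k a * B a b) * A b k')"
  proof (rule sum.cong[OF refl])
    fix b :: "'i mon" assume b: "b \<in> Bd (mdeg k')"
    have "(\<Sum>a\<in>Bd (mdeg k'). C k a * B a b * A b k') = (\<Sum>a\<in>Bd (mdeg b). C k a * B a b * A b k')"
      by (rule sum.mono_neutral_right) (use finite_Bd b assms(2) in \<open>auto simp: Bd_def upper_def\<close>)
    then show "(\<Sum>a\<in>Bd (mdeg k'). C k a * B a b * A b k') = (\<Sum>a\<in>Bd (mdeg b). C k a * B a b) * A b k'"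
      by (simp add: sum_distrib_right)
  qed
  also have "\<dots> = op_comp A (op_comp B C) k k'"
    unfolding comp_fin[OF assms(1)] comp_fin[OF assms(2)] ..
  finally show "op_comp (op_comp A B) C k k' = op_comp A (op_comp B C) k k'" .
qed


definition Wset :: "(nat \<Rightarrow> 'a set) \<Rightarrow> nat \<Rightarrow> 'a list set" where
  "Wset LS d = {w. set w \<subseteq> LS d \<and> length w \<le> d}"

definition wop :: "('a \<Rightarrow> 'i op) \<Rightarrow> 'a list \<Rightarrow> 'i op" where
  "wop C w = foldr (\<lambda>n acc. op_comp (C n) acc) w op_id"

lemma word_op_wop: "word_op C w = wop C w"
  by (simp add: word_op_def wop_def)

definition ev :: "('a \<Rightarrow> 'i::finite op) \<Rightarrow> (nat \<Rightarrow> 'a set) \<Rightarrow> ('a list \<Rightarrow> complex) \<Rightarrow> 'i op" where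
  "ev C LS M k k' = (\<Sum>w\<in>Wset LS (mdeg k'). M w * wop C w k k')"

definition mprod :: "('a list \<Rightarrow> complex) \<Rightarrow> ('a list \<Rightarrow> complex) \<Rightarrow> 'a list \<Rightarrow> complex" where
  "mprod M M' w = (\<Sum>i\<in>{..length w}. M (take i w) * M' (drop i w))"

definition delta0 :: "'a list \<Rightarrow> complex" where
  "delta0 w = (if w = [] then 1 else 0)"

primrec mpow :: "('a list \<Rightarrow> complex) \<Rightarrow> nat \<Rightarrow> 'a list \<Rightarrow> complex" where
  "mpow M 0 = delta0"
| "mpow M (Suc r) = mprod M (mpow M r)"

definition pser :: "(nat \<Rightarrow> complex) \<Rightarrow> ('a list \<Rightarrow> complex) \<Rightarrow> 'a list \<Rightarrow> complex" where
  "pser a M w = (\<Sum>r\<in>{..length w}. a r * mpow M r w)"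

lemma wop_Nil[simp]: "wop C [] = op_id"
  by (simp add: wop_def)

lemma wop_Cons[simp]: "wop C (n # w) = op_comp (C n) (wop C w)"
  by (simp add: wop_def)

lemma op_pow_0[simp]: "op_pow A 0 = op_id" by (simp add: op_pow_def)
lemma op_pow_Suc[simp]: "op_pow A (Suc r) = op_comp A (op_pow A r)" by (simp add: op_pow_def)

lemma upper_id: "upper op_id" by (simp add: upper_def op_id_def)

lemma finite_Wset: "finite (LS d) \<Longrightarrow> finite (Wset LS d)"
  unfolding Wset_def by (rule finite_lists_length_le)

lemma mpow_small:
  assumes "M [] = 0" shows "length w < r \<Longrightarrow> mpow M r w = 0"
proof (induction r arbitrary: w)
  case 0 then show ?case by simp
next
  case (Suc r)
  have "mprod M (mpow M r) w = 0" unfolding mprod_def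
  proof (rule sum.neutral, intro ballI)
    fix i assume "i \<in> {..length w}"
    show "M (take i w) * mpow M r (drop i w) = 0"
    proof (cases "i = 0")
      case True then show ?thesis using assms by simp
    next
      case False then have "length (drop i w) < r" using Suc.prems \<open>i \<in> {..length w}\<close> by auto
      then show ?thesis using Suc.IH by simp
    qed
  qed
  then show ?case by simp
qed

locale alph =
  fixes C :: "'a \<Rightarrow> 'i::finite op" and LS :: "nat \<Rightarrow> 'a set"
  assumes LS_fin: "finite (LS d)"
    and LS_mono: "d \<le> d' \<Longrightarrow> LS d \<subseteq> LS d'"
    and C_supp: "C a k k' \<noteq> 0 \<Longrightarrow> mdeg k < mdeg k' \<and> a \<in> LS (mdeg k')"
begin

abbreviation "W \<equiv> Wset LS"
abbreviation "EV \<equiv> ev C LS"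

lemma finW: "finite (W d)" by (rule finite_Wset[OF LS_fin])

lemma W_mono: "d \<le> d' \<Longrightarrow> W d \<subseteq> W d'"
  using LS_mono[of d d'] unfolding Wset_def by auto

lemma C_supper: "supper (C a)"
  unfolding supper_def using C_supp by blast

lemma wo_upper: "upper (wop C w)"
proof (induction w)
  case Nil then show ?case by (simp add: upper_id)
next
  case (Cons n w) show ?case
    unfolding wop_Cons by (rule upper_comp[OF supper_upper[OF C_supper] Cons.IH])
qed

lemma wo_nz: "wop C w k k' \<noteq> 0 \<Longrightarrow> mdeg k + length w \<le> mdeg k' \<and> set w \<subseteq> LS (mdeg k')"
proof (induction w arbitrary: k')
  case Nil then show ?case by (auto simp: op_id_def split: if_splits)
next
  case (Cons n w)
  obtain k'' where k'': "wop C w k k'' \<noteq> 0" "C n k'' k' \<noteq> 0"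
    using comp_nonzero[of "C n" "wop C w" k k'] Cons.prems by auto
  have 1: "mdeg k + length w \<le> mdeg k''" "set w \<subseteq> LS (mdeg k'')" using Cons.IH[OF k''(1)] by auto
  have 2: "mdeg k'' < mdeg k'" "n \<in> LS (mdeg k')" using C_supp[OF k''(2)] by auto
  have "LS (mdeg k'') \<subseteq> LS (mdeg k')" using 2 by (intro LS_mono) simp
  with 1 2 show ?case by auto
qed

lemma wo_W: "wop C w k k' \<noteq> 0 \<Longrightarrow> w \<in> W (mdeg k')"
  using wo_nz[of w k k'] unfolding Wset_def by auto

lemma ev_any:
  assumes "finite S" "W (mdeg k') \<subseteq> S"
  shows "EV M k k' = (\<Sum>w\<in>S. M w * wop C w k k')"
  unfolding ev_def
proof (rule sum.mono_neutral_left[OF assms], intro ballI)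
  fix w assume "w \<in> S - W (mdeg k')"
  then have "wop C w k k' = 0" using wo_W by blast
  then show "M w * wop C w k k' = 0" by simp
qed

lemma ev_nz: "EV M k k' \<noteq> 0 \<Longrightarrow> \<exists>w. M w \<noteq> 0 \<and> wop C w k k' \<noteq> 0"
proof (rule ccontr)
  assume a: "EV M k k' \<noteq> 0" "\<not> (\<exists>w. M w \<noteq> 0 \<and> wop C w k k' \<noteq> 0)"
  then have "\<forall>w. M w * wop C w k k' = 0" by auto
  then have "EV M k k' = 0" unfolding ev_def by (intro sum.neutral) blast
  with a show False by simp
qed

lemma ev_upper: "upper (EV M)"
  unfolding upper_def
proof (intro allI impI)
  fix k k' assume "EV M k k' \<noteq> 0"
  then obtain w where "wop C w k k' \<noteq> 0" using ev_nz by blast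
  then show "mdeg k \<le> mdeg k'" using wo_nz[of w k k'] by simp
qed

lemma ev_supper: "M [] = 0 \<Longrightarrow> supper (EV M)"
  unfolding supper_def
proof (intro allI impI)
  fix k k' assume M0: "M [] = 0" and nz: "EV M k k' \<noteq> 0"
  obtain w where w: "M w \<noteq> 0" "wop C w k k' \<noteq> 0" using ev_nz[OF nz] by blast
  then have "w \<noteq> []" using M0 by auto
  then show "mdeg k < mdeg k'" using wo_nz[OF w(2)] by (cases w) auto
qed

lemma wo_append: "wop C (u @ v) = op_comp (wop C u) (wop C v)"
proof (induction u)
  case Nil then show ?case by (simp add: comp_id_left)
next
  case (Cons n u)
  show ?case using Cons
    by (simp add: comp_assoc[OF supper_upper[OF C_supper] wo_upper])
qed

lemma ev_delta0: "EV delta0 = op_id"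
proof (intro ext)
  fix k k'
  have "EV delta0 k k' = (\<Sum>w\<in>{[]}. delta0 w * wop C w k k')"
    unfolding ev_def
    by (rule sum.mono_neutral_right) (use finW in \<open>auto simp: delta0_def Wset_def\<close>)
  then show "EV delta0 k k' = op_id k k'" by (simp add: delta0_def)
qed

lemma ev_add: "EV (\<lambda>w. M w + M' w) k k' = EV M k k' + EV M' k k'"
  unfolding ev_def by (simp add: distrib_right sum.distrib)

lemma ev_diff: "EV (\<lambda>w. M w - M' w) k k' = EV M k k' - EV M' k k'"
  unfolding ev_def by (simp add: left_diff_distrib sum_subtractf)

lemma ev_scale: "EV (\<lambda>w. c * M w) k k' = c * EV M k k'"
  unfolding ev_def by (simp add: sum_distrib_left mult.assoc)

lemma ev_zero: "EV (\<lambda>w. 0) = op_zero"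
  unfolding ev_def op_zero_def by simp

end


context alph begin

lemma swap3: "(\<Sum>u\<in>A. \<Sum>v\<in>B. \<Sum>b\<in>D. f u v b) = (\<Sum>b\<in>D. \<Sum>u\<in>A. \<Sum>v\<in>B. f u v b)"
proof -
  have "(\<Sum>u\<in>A. \<Sum>v\<in>B. \<Sum>b\<in>D. f u v b) = (\<Sum>u\<in>A. \<Sum>b\<in>D. \<Sum>v\<in>B. f u v b)"
    by (rule sum.cong[OF refl], rule sum.swap)
  also have "\<dots> = (\<Sum>b\<in>D. \<Sum>u\<in>A. \<Sum>v\<in>B. f u v b)" by (rule sum.swap)
  finally show ?thesis .
qed

lemma ev_mprod: "EV (mprod M M') = op_comp (EV M) (EV M')"
proof (intro ext)
  fix k k' :: "'i mon"
  define d where "d = mdeg k'"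
  let ?W = "W d"
  let ?G = "\<lambda>(u, v). M u * M' v * wop C (u @ v) k k'"
  let ?f = "\<lambda>(w, i). (take i w, drop i w)"
  let ?S = "Sigma ?W (\<lambda>w. {..length w})"
  have fW: "finite ?W" by (rule finW)
  have "EV (mprod M M') k k' = (\<Sum>w\<in>?W. \<Sum>i\<in>{..length w}. M (take i w) * M' (drop i w) * wop C w k k')"
    unfolding ev_def mprod_def d_def by (simp add: sum_distrib_right)
  also have "\<dots> = (\<Sum>p\<in>?S. ?G (?f p))"
  proof -
    have "(\<Sum>w\<in>?W. \<Sum>i\<in>{..length w}. M (take i w) * M' (drop i w) * wop C w k k')
       = (\<Sum>(w,i)\<in>?S. M (take i w) * M' (drop i w) * wop C w k k')"
      by (rule sum.Sigma) (simp_all add: fW)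
    also have "\<dots> = (\<Sum>p\<in>?S. ?G (?f p))"
    proof (rule sum.cong[OF refl])
      fix p assume "p \<in> ?S"
      obtain w i where "p = (w, i)" by (cases p)
      then show "(case p of (w,i) \<Rightarrow> M (take i w) * M' (drop i w) * wop C w k k') = ?G (?f p)"
        by simp
    qed
    finally show ?thesis .
  qed
  also have "\<dots> = (\<Sum>q\<in>?f ` ?S. ?G q)"
  proof (rule sum.reindex[symmetric, unfolded comp_def])
    show "inj_on ?f ?S"
    proof (rule inj_onI)
      fix p q assume "p \<in> ?S" "q \<in> ?S" "?f p = ?f q"
      then show "p = q"
      proof -
        obtain w i w' i' where pq: "p = (w, i)" "q = (w', i')" by (cases p, cases q) 
        have "i \<le> length w" "i' \<le> length w'" using \<open>p \<in> ?S\<close> \<open>q \<in> ?S\<close> pq by auto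
        moreover have "take i w = take i' w'" "drop i w = drop i' w'" using \<open>?f p = ?f q\<close> pq by auto
        ultimately have "w = w'" "i = i'"
          using append_take_drop_id[of i w] append_take_drop_id[of i' w'] length_take[of i w] length_take[of i' w']
          by (metis, metis min_absorb2)
        then show ?thesis using pq by simp
      qed
    qed
  qed
  also have "\<dots> = (\<Sum>q\<in>?W \<times> ?W. ?G q)"
  proof (rule sum.mono_neutral_left)
    show "finite (?W \<times> ?W)" using fW by simp
    show "?f ` ?S \<subseteq> ?W \<times> ?W"
    proof
      fix q assume "q \<in> ?f ` ?S"
      then obtain p where p: "p \<in> ?S" "q = ?f p" by blast
      obtain w i where "p = (w, i)" by (cases p)
      then have wi: "w \<in> ?W" "q = (take i w, drop i w)" using p by auto
      have "take i w \<in> ?W" "drop i w \<in> ?W" using wi(1) set_take_subset[of i w] set_drop_subset[of i w]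
        unfolding Wset_def by auto
      then show "q \<in> ?W \<times> ?W" using wi(2) by simp
    qed
    show "\<forall>q\<in>?W \<times> ?W - ?f ` ?S. ?G q = 0"
    proof
      fix q assume q: "q \<in> ?W \<times> ?W - ?f ` ?S"
      obtain u v where uv: "q = (u, v)" by (cases q)
      show "?G q = 0"
      proof (rule ccontr)
        assume "?G q \<noteq> 0"
        then have "wop C (u @ v) k k' \<noteq> 0" using uv by auto
        then have "u @ v \<in> ?W" using wo_W d_def by blast
        then have "(u @ v, length u) \<in> ?S" by simp
        then have "?f (u @ v, length u) \<in> ?f ` ?S" by blast
        then show False using q uv by simp
      qed
    qed
  qed
  also have "\<dots> = (\<Sum>u\<in>?W. \<Sum>v\<in>?W. ?G (u, v))"
    by (simp add: sum.cartesian_product)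
  also have "\<dots> = (\<Sum>u\<in>?W. \<Sum>v\<in>?W. \<Sum>b\<in>Bd d. (M' v * wop C v k b) * (M u * wop C u b k'))"
  proof (intro sum.cong refl)
    fix u v
    have "wop C (u @ v) k k' = (\<Sum>b\<in>Bd d. wop C v k b * wop C u b k')"
      unfolding wo_append comp_fin[OF wo_upper] d_def ..
    then show "?G (u, v) = (\<Sum>b\<in>Bd d. (M' v * wop C v k b) * (M u * wop C u b k'))"
      by (simp add: sum_distrib_left mult_ac)
  qed
  also have "\<dots> = (\<Sum>b\<in>Bd d. \<Sum>u\<in>?W. \<Sum>v\<in>?W. (M' v * wop C v k b) * (M u * wop C u b k'))"
    by (rule swap3)
  also have "\<dots> = (\<Sum>b\<in>Bd d. EV M' k b * EV M b k')"
  proof (rule sum.cong[OF refl])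
    fix b :: "'i mon" assume b: "b \<in> Bd d"
    have "EV M' k b = (\<Sum>v\<in>?W. M' v * wop C v k b)"
      by (rule ev_any[OF fW W_mono]) (use b in \<open>simp add: Bd_def\<close>)
    moreover have "EV M b k' = (\<Sum>u\<in>?W. M u * wop C u b k')"
      unfolding ev_def d_def ..
    ultimately show "(\<Sum>u\<in>?W. \<Sum>v\<in>?W. (M' v * wop C v k b) * (M u * wop C u b k')) = EV M' k b * EV M b k'"
      by (simp only: sum_product mult.commute[of "EV M' k b"]) (rule sum.swap)
  qed
  also have "\<dots> = op_comp (EV M) (EV M') k k'"
    unfolding comp_fin[OF ev_upper] d_def ..
  finally show "EV (mprod M M') k k' = op_comp (EV M) (EV M') k k'" .
qed

lemma ev_mpow: "op_pow (EV M) r = EV (mpow M r)"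
  by (induction r) (simp_all add: ev_delta0 ev_mprod)

lemma ev_pser:
  assumes M0: "M [] = 0"
  shows "((\<lambda>r. a r * op_pow (EV M) r k k') has_sum EV (pser a M) k k') UNIV"
proof -
  define d where "d = mdeg k'"
  have fW: "finite (W d)" by (rule finW)
  have z: "mpow M r w = 0" if "w \<in> W d" "d < r" for w r
    using mpow_small[where M=M, OF M0, of w r] that by (auto simp: Wset_def)
  have "EV (pser a M) k k' = (\<Sum>w\<in>W d. \<Sum>r\<in>{..length w}. a r * mpow M r w * wop C w k k')"
    unfolding ev_def pser_def d_def by (simp add: sum_distrib_right)
  also have "\<dots> = (\<Sum>w\<in>W d. \<Sum>r\<in>{..d}. a r * mpow M r w * wop C w k k')"
  proof (rule sum.cong[OF refl])
    fix w assume w: "w \<in> W d"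
    then have le: "length w \<le> d" by (simp add: Wset_def)
    show "(\<Sum>r\<in>{..length w}. a r * mpow M r w * wop C w k k') = (\<Sum>r\<in>{..d}. a r * mpow M r w * wop C w k k')"
      by (rule sum.mono_neutral_left) (use le mpow_small[where M=M, OF M0, of w] in auto)
  qed
  also have "\<dots> = (\<Sum>r\<in>{..d}. a r * op_pow (EV M) r k k')"
    unfolding ev_mpow ev_def d_def
    by (simp add: sum.swap[of _ "W (mdeg k')"] sum_distrib_left mult_ac)
  finally have eq: "EV (pser a M) k k' = (\<Sum>r\<in>{..d}. a r * op_pow (EV M) r k k')" .
  show ?thesis unfolding eq
  proof (rule has_sum_finite_neutralI)
    show "\<And>x. x \<in> UNIV - {..d} \<Longrightarrow> a x * op_pow (EV M) x k k' = 0"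
    proof -
      fix r assume "r \<in> UNIV - {..d}"
      then have r: "d < r" by auto
      have "op_pow (EV M) r k k' = (\<Sum>w\<in>W d. mpow M r w * wop C w k k')"
        unfolding ev_mpow ev_def d_def ..
      also have "\<dots> = 0" using z r by simp
      finally show "a r * op_pow (EV M) r k k' = 0" by simp
    qed
  qed auto
qed

end


definition alog :: "nat \<Rightarrow> complex" where
  "alog r = (if r = 0 then 0 else (-1)^(r+1) / of_nat r)"

definition aexp :: "nat \<Rightarrow> complex" where
  "aexp r = 1 / fact r"

lemma pser_Nil: "pser a M [] = a 0"
  by (simp add: pser_def delta0_def)

lemma mprod_Nil: "mprod M M' [] = M [] * M' []"
  by (simp add: mprod_def)

context alph begin

lemma ev_log1p:
  assumes M0: "M [] = 0"
  shows "op_log1p (EV M) = EV (pser alog M)"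
proof (intro ext)
  fix k k' :: "'i mon"
  have h: "((\<lambda>r. alog r * op_pow (EV M) r k k') has_sum EV (pser alog M) k k') UNIV"
    by (rule ev_pser[where M=M, OF M0])
  have "((\<lambda>r. (-1)^(r+1) / of_nat r * op_pow (EV M) r k k') has_sum EV (pser alog M) k k') {1..}"
    using h
    by (subst (asm) has_sum_cong_neutral[where T="{1..}" and g="\<lambda>r. (-1)^(r+1) / of_nat r * op_pow (EV M) r k k'"])
       (auto simp: alog_def)
  then show "op_log1p (EV M) k k' = EV (pser alog M) k k'"
    unfolding op_log1p_def by (rule infsumI)
qed

lemma ev_exp:
  assumes M0: "M [] = 0"
  shows "op_exp (EV M) = EV (pser aexp M)"
proof (intro ext)
  fix k k' :: "'i mon"
  have h: "((\<lambda>r. aexp r * op_pow (EV M) r k k') has_sum EV (pser aexp M) k k') UNIV"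
    by (rule ev_pser[where M=M, OF M0])
  have "(\<lambda>r. op_pow (EV M) r k k' / fact r) = (\<lambda>r. aexp r * op_pow (EV M) r k k')"
    by (simp add: aexp_def)
  with h show "op_exp (EV M) k k' = EV (pser aexp M) k k'"
    unfolding op_exp_def by (simp add: infsumI)
qed

end


unbundle no vec_syntax
notation fps_nth (infixl \<open>$\<close> 75)

definition psi :: "(unit list \<Rightarrow> complex) \<Rightarrow> complex fps" where
  "psi M = Abs_fps (\<lambda>n. M (replicate n ()))"

lemma unit_list: "(w::unit list) = replicate (length w) ()"
  by (induction w) auto

lemma psi_nth: "psi M $ n = M (replicate n ())"
  by (simp add: psi_def)

lemma psi_mprod: "psi (mprod M M') = psi M * psi M'"
proof (rule fps_ext)
  fix n
  have "psi (mprod M M') $ n = (\<Sum>i\<in>{..n}. M (replicate i ()) * M' (replicate (n - i) ()))"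
    unfolding psi_nth mprod_def by (intro sum.cong) (auto simp: take_replicate drop_replicate)
  also have "\<dots> = (psi M * psi M') $ n"
    unfolding fps_mult_nth psi_nth atLeast0AtMost ..
  finally show "psi (mprod M M') $ n = (psi M * psi M') $ n" .
qed

lemma psi_delta0: "psi delta0 = 1"
  by (rule fps_ext) (simp add: psi_nth delta0_def)

lemma psi_mpow: "psi (mpow M r) = psi M ^ r"
  by (induction r) (simp_all add: psi_delta0 psi_mprod)

lemma psi_pser_nth: "psi (pser a M) $ n = (\<Sum>r\<in>{..n}. a r * (psi M ^ r) $ n)"
  unfolding psi_nth pser_def psi_mpow[symmetric] by simp

lemma fps_exp_ln: "fps_exp (1::complex) oo fps_ln 1 = 1 + fps_X"
proof -
  have i: "(fps_exp 1 - 1) oo fps_inv (fps_exp (1::complex) - 1) = fps_X"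
    by (rule fps_inv_right) simp_all
  have l: "fps_ln (1::complex) = fps_inv (fps_exp 1 - 1)"
    by (rule fps_ln_fps_exp_inv) simp
  have "fps_exp (1::complex) = (fps_exp 1 - 1) + 1" by simp
  then have "fps_exp (1::complex) oo fps_ln 1 = ((fps_exp 1 - 1) oo fps_ln 1) + (1 oo fps_ln 1)"
    by (metis fps_compose_add_distrib)
  also have "\<dots> = fps_X + 1" using i l by simp
  finally show ?thesis by simp
qed

lemma unit_alph: "supper N \<Longrightarrow> alph (\<lambda>_::unit. N) (\<lambda>_. UNIV)"
  by unfold_locales (auto simp: supper_def)

definition single1 :: "'a list \<Rightarrow> complex" where
  "single1 w = (if length w = 1 then 1 else 0)"

lemma unit_single:
  assumes sN: "supper N"
  shows "ev (\<lambda>_::unit. N) (\<lambda>_. UNIV) single1 = N"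
proof -
  interpret U: alph "\<lambda>_::unit. N" "\<lambda>_. UNIV" by (rule unit_alph[OF sN])
  define M1 where "M1 = (single1 :: unit list \<Rightarrow> complex)"
  have M1_def': "M1 w = (if length w = 1 then 1 else 0)" for w by (simp add: M1_def single1_def)
  have EN: "U.EV M1 = N"
  proof (intro ext)
    fix k k' :: "'a mon"
    have "U.EV M1 k k' = (\<Sum>w\<in>insert [()] (Wset (\<lambda>_. UNIV) (mdeg k')). M1 w * wop (\<lambda>_. N) w k k')"
      by (rule U.ev_any) (auto simp: U.finW)
    also have "\<dots> = (\<Sum>w\<in>{[()]}. M1 w * wop (\<lambda>_. N) w k k')"
    proof (rule sum.mono_neutral_right)
      show "finite (insert [()] (Wset (\<lambda>_. UNIV) (mdeg k')))" by (simp add: U.finW)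
      show "\<forall>w\<in>insert [()] (Wset (\<lambda>_. UNIV) (mdeg k')) - {[()]}. M1 w * wop (\<lambda>_. N) w k k' = 0"
      proof
        fix w :: "unit list" assume "w \<in> insert [()] (Wset (\<lambda>_. UNIV) (mdeg k')) - {[()]}"
        then have "w \<noteq> [()]" by simp
        then have "length w \<noteq> 1" by (metis One_nat_def length_0_conv length_Suc_conv old.unit.exhaust)
        then show "M1 w * wop (\<lambda>_. N) w k k' = 0" by (simp add: M1_def')
      qed
    qed simp
    also have "\<dots> = N k k'" by (simp add: M1_def' comp_id_right)
    finally show "U.EV M1 k k' = N k k'" .
  qed
  then show ?thesis by (simp add: M1_def)
qed

lemma supper_log1p:
  assumes sN: "supper N"
  shows "supper (op_log1p N)"
proof -
  interpret U: alph "\<lambda>_::unit. N" "\<lambda>_. UNIV" by (rule unit_alph[OF sN])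
  have M10: "single1 [] = 0" by (simp add: single1_def)
  have "op_log1p N = U.EV (pser alog single1)"
    using U.ev_log1p[where M=single1, OF M10] unit_single[OF sN] by simp
  moreover have "supper (U.EV (pser alog single1))"
    by (rule U.ev_supper) (simp add: pser_Nil alog_def)
  ultimately show ?thesis by simp
qed

lemma exp_log1p:
  assumes sN: "supper N"
  shows "op_exp (op_log1p N) = (\<lambda>k k'. op_id k k' + N k k')"
proof -
  interpret U: alph "\<lambda>_::unit. N" "\<lambda>_. UNIV" by (rule unit_alph[OF sN])
  define M1 where "M1 = (single1 :: unit list \<Rightarrow> complex)"
  have M1_def': "M1 w = (if length w = 1 then 1 else 0)" for w by (simp add: M1_def single1_def)
  have EN: "U.EV M1 = N" unfolding M1_def by (rule unit_single[OF sN])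
  define Ml where "Ml = pser alog M1"
  have M10: "M1 [] = 0" by (simp add: M1_def')
  have Ml0: "Ml [] = 0" by (simp add: Ml_def pser_Nil alog_def)
  have L: "op_log1p N = U.EV Ml"
    using U.ev_log1p[where M=M1, OF M10] EN unfolding Ml_def by simp
  have E: "op_exp (U.EV Ml) = U.EV (pser aexp Ml)"
    by (rule U.ev_exp[where M=Ml, OF Ml0])
  have p1: "psi M1 = fps_X"
    by (rule fps_ext) (simp add: psi_nth M1_def')
  have p2: "psi Ml = fps_ln 1"
  proof (rule fps_ext)
    fix n
    have "psi Ml $ n = (\<Sum>r\<in>{..n}. alog r * (if n = r then 1 else 0))"
      unfolding Ml_def psi_pser_nth p1 fps_X_power_nth ..
    also have "\<dots> = (\<Sum>r\<in>{n}. alog r * (if n = r then 1 else 0))"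
      by (rule sum.mono_neutral_right) auto
    also have "\<dots> = alog n" by simp
    also have "\<dots> = fps_ln 1 $ n"
    proof (cases n)
      case 0 then show ?thesis by (simp add: alog_def)
    next
      case (Suc m)
      have "(-1::complex)^(n+1) = (-1)^(n-1)" using Suc by (simp add: power_Suc)
      then show ?thesis using Suc by (simp add: alog_def fps_ln_nth)
    qed
    finally show "psi Ml $ n = fps_ln 1 $ n" .
  qed
  have coeff: "pser aexp Ml w = delta0 w + M1 w" for w
  proof -
    define n where "n = length w"
    have "pser aexp Ml w = psi (pser aexp Ml) $ n"
      unfolding psi_nth n_def using unit_list[of w] by simp
    also have "\<dots> = (\<Sum>r\<in>{..n}. aexp r * (fps_ln 1 ^ r) $ n)"
      unfolding psi_pser_nth p2 ..
    also have "\<dots> = (fps_exp 1 oo fps_ln 1) $ n"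
      unfolding fps_compose_nth atLeast0AtMost by (simp add: aexp_def)
    also have "\<dots> = (1 + fps_X) $ n" unfolding fps_exp_ln ..
    also have "\<dots> = delta0 w + M1 w"
      by (simp add: delta0_def M1_def' n_def)
    finally show ?thesis .
  qed
  show ?thesis
    unfolding L E coeff
    by (intro ext) (simp add: U.ev_add U.ev_delta0 EN)
qed


definition dstep :: "'i mon \<Rightarrow> 'i mon \<Rightarrow> 'i deg" where
  "dstep k k' = (\<lambda>j. int (k' j) - int (k j))"

definition HL :: "nat \<Rightarrow> 'i::finite deg set" where
  "HL d = (\<lambda>(a, b). dstep a b) ` (Bd d \<times> Bd d)"

definition sdeg :: "'i deg list \<Rightarrow> 'i deg" where
  "sdeg w = (\<lambda>j. sum_list (map (\<lambda>n. n j) w))"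

lemma is_step_iff: "is_step k n k' \<longleftrightarrow> n = dstep k k'"
  unfolding is_step_def dstep_def fun_eq_iff by auto

lemma ldot_dstep: "ldot lam (dstep a b) = ldot lam (zmon b) - ldot lam (zmon a)"
  unfolding ldot_def dstep_def zmon_def by (simp add: algebra_simps sum_subtractf)

lemma sdeg_Nil: "sdeg [] = (\<lambda>j. 0)" by (simp add: sdeg_def)

lemma ldot_zero: "ldot lam (\<lambda>j. 0) = 0" by (simp add: ldot_def)

lemma hom_alph: "supper X \<Longrightarrow> alph (hom_comp X) HL"
proof unfold_locales
  fix d :: nat show "finite (HL d :: 'a deg set)"
    unfolding HL_def using finite_Bd[of d] by (intro finite_imageI finite_cartesian_product) auto
next
  fix d d' :: nat assume "d \<le> d'"
  then have "Bd d \<subseteq> (Bd d' :: 'a mon set)" by (auto simp: Bd_def)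
  then show "(HL d :: 'a deg set) \<subseteq> HL d'" unfolding HL_def by blast
next
  fix a k k' assume sX: "supper X" and nz: "hom_comp X a k k' \<noteq> 0"
  then have st: "is_step k a k'" and X: "X k k' \<noteq> 0" by (auto simp: hom_comp_def split: if_splits)
  then have lt: "mdeg k < mdeg k'" using sX by (auto simp: supper_def)
  have "a = dstep k k'" using st is_step_iff by blast
  moreover have "(k, k') \<in> Bd (mdeg k') \<times> Bd (mdeg k')" using lt by (auto simp: Bd_def)
  ultimately have "a \<in> HL (mdeg k')" unfolding HL_def by force
  with lt show "mdeg k < mdeg k' \<and> a \<in> HL (mdeg k')" by simp
qed

locale halph = alph C HL for C :: "'i::finite deg \<Rightarrow> 'i op" +
  assumes C_step: "C n k k' \<noteq> 0 \<Longrightarrow> is_step k n k'"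
begin

lemma wo_step: "wop C w k k' \<noteq> 0 \<Longrightarrow> sdeg w = dstep k k'"
proof (induction w arbitrary: k')
  case Nil then show ?case by (auto simp: op_id_def sdeg_def dstep_def split: if_splits)
next
  case (Cons n w)
  obtain k'' where k'': "wop C w k k'' \<noteq> 0" "C n k'' k' \<noteq> 0"
    using comp_nonzero[of "C n" "wop C w" k k'] Cons.prems by auto
  have 1: "sdeg w = dstep k k''" using Cons.IH[OF k''(1)] .
  have 2: "n = dstep k'' k'" using C_step[OF k''(2)] is_step_iff by blast
  show ?case
  proof
    fix j
    have "sdeg (n # w) j = n j + sdeg w j" by (simp add: sdeg_def)
    then show "sdeg (n # w) j = dstep k k' j" using 1 2 by (simp add: dstep_def)
  qed
qed

lemma ev_hom: "hom_comp (EV M) m = EV (\<lambda>w. if sdeg w = m then M w else 0)"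
proof (intro ext)
  fix k k' :: "'i mon"
  show "hom_comp (EV M) m k k' = EV (\<lambda>w. if sdeg w = m then M w else 0) k k'"
  proof (cases "m = dstep k k'")
    case True
    have "EV M k k' = EV (\<lambda>w. if sdeg w = m then M w else 0) k k'"
      unfolding ev_def
    proof (rule sum.cong[OF refl])
      fix w
      show "M w * wop C w k k' = (if sdeg w = m then M w else 0) * wop C w k k'"
        using wo_step[of w k k'] True by (cases "wop C w k k' = 0") auto
    qed
    then show ?thesis using True by (simp add: hom_comp_def is_step_iff)
  next
    case False
    have "EV (\<lambda>w. if sdeg w = m then M w else 0) k k' = 0"
      unfolding ev_def
    proof (rule sum.neutral, intro ballI)
      fix w
      show "(if sdeg w = m then M w else 0) * wop C w k k' = 0"
        using wo_step[of w k k'] False by (cases "wop C w k k' = 0") auto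
    qed
    then show ?thesis using False by (simp add: hom_comp_def is_step_iff)
  qed
qed

lemma ev_sgen:
  "(\<lambda>k k'. infsum (\<lambda>m. hom_comp (EV P) m k k' / c m) NS)
     = EV (\<lambda>w. if sdeg w \<in> NS then P w / c (sdeg w) else 0)"
proof (intro ext)
  fix k k' :: "'i mon"
  define m0 where "m0 = dstep k k'"
  have "infsum (\<lambda>m. hom_comp (EV P) m k k' / c m) NS = sum (\<lambda>m. hom_comp (EV P) m k k' / c m) (NS \<inter> {m0})"
    by (rule infsum_fin) (auto simp: hom_comp_def is_step_iff m0_def)
  also have "\<dots> = (if m0 \<in> NS then EV P k k' / c m0 else 0)"
    by (cases "m0 \<in> NS") (auto simp: hom_comp_def is_step_iff m0_def)
  also have "\<dots> = EV (\<lambda>w. if sdeg w \<in> NS then P w / c (sdeg w) else 0) k k'"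
  proof -
    have "EV (\<lambda>w. if sdeg w \<in> NS then P w / c (sdeg w) else 0) k k'
        = (\<Sum>w\<in>W (mdeg k'). (if m0 \<in> NS then 1 / c m0 else 0) * (P w * wop C w k k'))"
      unfolding ev_def
    proof (rule sum.cong[OF refl])
      fix w
      show "(if sdeg w \<in> NS then P w / c (sdeg w) else 0) * wop C w k k' =
            (if m0 \<in> NS then 1 / c m0 else 0) * (P w * wop C w k k')"
        using wo_step[of w k k'] unfolding m0_def by (cases "wop C w k k' = 0") auto
    qed
    also have "\<dots> = (if m0 \<in> NS then 1 / c m0 else 0) * EV P k k'"
      unfolding ev_def by (simp add: sum_distrib_left)
    finally show ?thesis by simp
  qed
  finally show "infsum (\<lambda>m. hom_comp (EV P) m k k' / c m) NS
      = EV (\<lambda>w. if sdeg w \<in> NS then P w / c (sdeg w) else 0) k k'" .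
qed

lemma ev_conj:
  "(\<lambda>a b. exp (ldot lam (zmon a) - ldot lam (zmon b)) * EV M a b)
     = EV (\<lambda>w. exp (- ldot lam (sdeg w)) * M w)"
proof (intro ext)
  fix a b :: "'i mon"
  have "EV (\<lambda>w. exp (- ldot lam (sdeg w)) * M w) a b
      = (\<Sum>w\<in>W (mdeg b). exp (ldot lam (zmon a) - ldot lam (zmon b)) * (M w * wop C w a b))"
    unfolding ev_def
  proof (rule sum.cong[OF refl])
    fix w
    show "exp (- ldot lam (sdeg w)) * M w * wop C w a b =
          exp (ldot lam (zmon a) - ldot lam (zmon b)) * (M w * wop C w a b)"
      using wo_step[of w a b] ldot_dstep[of lam a b] by (cases "wop C w a b = 0") auto
  qed
  also have "\<dots> = exp (ldot lam (zmon a) - ldot lam (zmon b)) * EV M a b"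
    unfolding ev_def by (simp add: sum_distrib_left)
  finally show "exp (ldot lam (zmon a) - ldot lam (zmon b)) * EV M a b = EV (\<lambda>w. exp (- ldot lam (sdeg w)) * M w) a b"
    by simp
qed

end

lemma hom_halph: "supper X \<Longrightarrow> halph (hom_comp X)"
  unfolding halph_def halph_axioms_def using hom_alph by (auto simp: hom_comp_def split: if_splits)

lemma ev_single:
  assumes sX: "supper X"
  shows "ev (hom_comp X) HL single1 = X"
proof -
  interpret H: halph "hom_comp X" by (rule hom_halph[OF sX])
  show ?thesis
  proof (intro ext)
    fix k k' :: "'a mon"
    define n0 where "n0 = dstep k k'"
    define S where "S = insert [n0] (Wset HL (mdeg k'))"
    have fS: "finite S" unfolding S_def by (simp add: H.finW)
    have "H.EV single1 k k' = (\<Sum>w\<in>S. single1 w * wop (hom_comp X) w k k')"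
      by (rule H.ev_any[OF fS]) (auto simp: S_def)
    also have "\<dots> = (\<Sum>w\<in>{[n0]}. single1 w * wop (hom_comp X) w k k')"
    proof (rule sum.mono_neutral_right[OF fS])
      show "{[n0]} \<subseteq> S" by (simp add: S_def)
      show "\<forall>w\<in>S - {[n0]}. single1 w * wop (hom_comp X) w k k' = 0"
      proof
        fix w assume w: "w \<in> S - {[n0]}"
        show "single1 w * wop (hom_comp X) w k k' = 0"
        proof (cases "length w = 1")
          case True
          then obtain n where n: "w = [n]" by (metis One_nat_def length_0_conv length_Suc_conv)
          then have "n \<noteq> n0" using w by auto
          then have "hom_comp X n k k' = 0" by (simp add: hom_comp_def is_step_iff n0_def)
          then show ?thesis using n by (simp add: comp_id_right)
        next
          case False then show ?thesis by (simp add: single1_def)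
        qed
      qed
    qed
    also have "\<dots> = X k k'"
      by (simp add: single1_def comp_id_right hom_comp_def is_step_iff n0_def)
    finally show "H.EV single1 k k' = X k k'" .
  qed
qed


lemma mdeg_unitmon: "mdeg (unitmon j :: 'i::finite mon) = 1"
  unfolding mdeg_def unitmon_def by simp

lemma F_low:
  fixes lam :: "'i::finite \<Rightarrow> complex" and h :: "'i \<Rightarrow> 'i ser"
  assumes h2: "\<forall>j p. mdeg p \<le> 1 \<longrightarrow> h j p = 0" and le: "mdeg k' \<le> mdeg k"
  shows "Fop lam h k k' = (if k = k' then exp (ldot lam (zmon k)) else 0)"
proof -
  define f where "f = fser lam h"
  define Q where "Q = (SIGMA j:(UNIV::'i set). {..<k j})"
  define CS where "CS = {c. c \<in> Q \<rightarrow>\<^sub>E {p. p \<le> k'} \<and> (\<forall>i. (\<Sum>q\<in>Q. c q i) = k' i)}"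
  define g where "g c = (\<Prod>q\<in>Q. f (fst q) (c q))" for c
  define c0 where "c0 = restrict (\<lambda>q. unitmon (fst q) :: 'i mon) Q"
  have F: "Fop lam h k k' = (\<Sum>c\<in>CS. g c)"
    unfolding Fop_def comp_op_def f_def Q_def CS_def g_def ..
  have f_nz: "p = unitmon j" if "f j p \<noteq> 0" "mdeg p \<le> 1" for j p
    using that h2 unfolding f_def fser_def by (auto split: if_splits)
  have f_nz0: "1 \<le> mdeg p" if "f j p \<noteq> 0" for j p
  proof (rule ccontr)
    assume "\<not> 1 \<le> mdeg p"
    then have "p = unitmon j" using f_nz[OF that] by simp
    then show False using \<open>\<not> 1 \<le> mdeg p\<close> mdeg_unitmon[of j] by simp
  qed
  have finQ: "finite Q" unfolding Q_def by auto
  have cardQ: "card Q = mdeg k"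
    unfolding Q_def mdeg_def by (subst card_SigmaI) auto
  have key: "c = c0" if c: "c \<in> CS" "g c \<noteq> 0" for c
  proof -
    have nz: "\<forall>q\<in>Q. f (fst q) (c q) \<noteq> 0" using c(2) finQ unfolding g_def by auto
    have "(\<Sum>q\<in>Q. mdeg (c q)) = (\<Sum>i\<in>UNIV. \<Sum>q\<in>Q. c q i)"
      unfolding mdeg_def by (rule sum.swap)
    also have "\<dots> = mdeg k'" using c(1) unfolding CS_def mdeg_def by simp
    finally have sd: "(\<Sum>q\<in>Q. mdeg (c q)) = mdeg k'" .
    have all1: "\<forall>q\<in>Q. mdeg (c q) = 1"
    proof (rule ccontr)
      assume "\<not> (\<forall>q\<in>Q. mdeg (c q) = 1)"
      then obtain q0 where q0: "q0 \<in> Q" "mdeg (c q0) \<noteq> 1" by blast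
      have "(\<Sum>q\<in>Q. (1::nat)) < (\<Sum>q\<in>Q. mdeg (c q))"
      proof (rule sum_strict_mono_ex1[OF finQ])
        show "\<forall>x\<in>Q. 1 \<le> mdeg (c x)" using nz f_nz0 by blast
        show "\<exists>a\<in>Q. 1 < mdeg (c a)" using q0 nz f_nz0[of "fst q0" "c q0"] by force
      qed
      then have "card Q < mdeg k'" using sd by simp
      then show False using cardQ le by simp
    qed
    show "c = c0"
    proof
      fix q
      show "c q = c0 q"
      proof (cases "q \<in> Q")
        case True
        then show ?thesis using all1 nz f_nz[of "fst q" "c q"] by (simp add: c0_def)
      next
        case False
        have "c \<in> Q \<rightarrow>\<^sub>E {p. p \<le> k'}" using c(1) unfolding CS_def by blast
        then have "c q = undefined" using False by (rule PiE_arb)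
        moreover have "c0 q = undefined" using False unfolding c0_def restrict_def by simp
        ultimately show ?thesis by simp
      qed
    qed
  qed
  have c0sum: "(\<Sum>q\<in>Q. c0 q i) = k i" for i
  proof -
    define G where "G j t = (if i = j then (1::nat) else 0)" for j and t :: nat
    have "(\<Sum>q\<in>Q. c0 q i) = (\<Sum>(j,t)\<in>Q. G j t)"
      by (rule sum.cong[OF refl]) (auto simp: c0_def unitmon_def G_def)
    also have "\<dots> = (\<Sum>j\<in>UNIV. \<Sum>t\<in>{..<k j}. G j t)"
      unfolding Q_def by (rule sum.Sigma[symmetric]) auto
    also have "\<dots> = (\<Sum>j\<in>UNIV. if i = j then k j else 0)"
      by (rule sum.cong[OF refl]) (simp add: G_def)
    also have "\<dots> = k i" by simp
    finally show ?thesis .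
  qed
  have finCS: "finite CS"
  proof (rule finite_subset)
    show "CS \<subseteq> Q \<rightarrow>\<^sub>E {p. p \<le> k'}" unfolding CS_def by blast
    have "{p. p \<le> k'} \<subseteq> Bd (mdeg k')"
    proof
      fix p assume "p \<in> {p. p \<le> k'}"
      then have "\<forall>j. p j \<le> k' j" by (simp add: le_fun_def)
      then have "mdeg p \<le> mdeg k'" unfolding mdeg_def by (intro sum_mono) blast
      then show "p \<in> Bd (mdeg k')" by (simp add: Bd_def)
    qed
    then have "finite {p. p \<le> k'}" using finite_Bd finite_subset by blast
    then show "finite (Q \<rightarrow>\<^sub>E {p. p \<le> k'})" using finQ by (intro finite_PiE) auto
  qed
  show ?thesis
  proof (cases "k = k'")
    case False
    have "\<forall>c\<in>CS. g c = 0"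
    proof
      fix c assume c: "c \<in> CS"
      show "g c = 0"
      proof (rule ccontr)
        assume "g c \<noteq> 0"
        then have "c = c0" using key c by blast
        then have "\<forall>i. k i = k' i" using c c0sum unfolding CS_def by auto
        then show False using False by auto
      qed
    qed
    then show ?thesis using F False by simp
  next
    case True
    have c0CS: "c0 \<in> CS"
    proof -
      have "c0 \<in> Q \<rightarrow>\<^sub>E {p. p \<le> k'}"
        unfolding c0_def Q_def True[symmetric] by (auto simp: le_fun_def unitmon_def)
      then show ?thesis unfolding CS_def using c0sum True by auto
    qed
    have "(\<Sum>c\<in>CS. g c) = (\<Sum>c\<in>{c0}. g c)"
    proof (rule sum.mono_neutral_right[OF finCS])
      show "{c0} \<subseteq> CS" using c0CS by simp
      show "\<forall>c\<in>CS - {c0}. g c = 0"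
      proof
        fix c assume c: "c \<in> CS - {c0}"
        show "g c = 0"
        proof (rule ccontr)
          assume "g c \<noteq> 0"
          then have "c = c0" using key c by blast
          then show False using c by simp
        qed
      qed
    qed
    also have "\<dots> = (\<Prod>q\<in>Q. exp (lam (fst q)))"
      unfolding g_def
    proof (simp, rule prod.cong[OF refl])
      fix q assume "q \<in> Q"
      then have "c0 q = unitmon (fst q)" by (simp add: c0_def)
      moreover have "h (fst q) (unitmon (fst q)) = 0" using h2 mdeg_unitmon[of "fst q"] by simp
      ultimately show "f (fst q) (c0 q) = exp (lam (fst q))" by (simp add: f_def fser_def)
    qed
    also have "\<dots> = (\<Prod>(j,t)\<in>Q. exp (lam j))"
      by (rule prod.cong[OF refl]) auto
    also have "\<dots> = (\<Prod>j\<in>UNIV. \<Prod>t\<in>{..<k j}. exp (lam j))"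
      unfolding Q_def by (rule prod.Sigma[symmetric]) auto
    also have "\<dots> = (\<Prod>j\<in>UNIV. exp (of_nat (k j) * lam j))"
      by (simp add: exp_of_nat_mult)
    also have "\<dots> = exp (ldot lam (zmon k))"
      unfolding ldot_def zmon_def by (simp add: exp_sum mult.commute)
    finally show ?thesis using F True by simp
  qed
qed

lemma flinv_comp: "op_comp (Flin_inv lam) T k k' = T k k' * exp (- ldot lam (zmon k'))"
proof -
  have "op_comp (Flin_inv lam) T k k' = (\<Sum>k''\<in>{k'}. T k k'' * Flin_inv lam k'' k')"
    unfolding op_comp_def by (rule infsum_fin) (auto simp: Flin_inv_def)
  then show ?thesis by (simp add: Flin_inv_def)
qed

lemma nilpart_F_supper:
  fixes lam :: "'i::finite \<Rightarrow> complex" and h :: "'i \<Rightarrow> 'i ser"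
  assumes h2: "\<forall>j p. mdeg p \<le> 1 \<longrightarrow> h j p = 0"
  shows "supper (nilpart lam (Fop lam h))"
  unfolding supper_def
proof (intro allI impI)
  fix k k' assume nz: "nilpart lam (Fop lam h) k k' \<noteq> 0"
  show "mdeg k < mdeg k'"
  proof (rule ccontr)
    assume "\<not> mdeg k < mdeg k'"
    then have "mdeg k' \<le> mdeg k" by simp
    then have Fk: "Fop lam h k k' = (if k = k' then exp (ldot lam (zmon k)) else 0)"
      by (rule F_low[OF h2])
    have "nilpart lam (Fop lam h) k k' = 0"
    proof (cases "k = k'")
      case True
      have "exp (ldot lam (zmon k')) * exp (- ldot lam (zmon k')) = 1"
        by (simp flip: exp_add)
      then show ?thesis unfolding nilpart_def flinv_comp Fk using True by (simp add: op_id_def)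
    next
      case False
      then show ?thesis unfolding nilpart_def flinv_comp Fk by (simp add: op_id_def)
    qed
    with nz show False by simp
  qed
qed


lemma wop_zero: "n \<in> set w \<Longrightarrow> C n = op_zero \<Longrightarrow> wop C w = op_zero"
proof (induction w)
  case Nil then show ?case by simp
next
  case (Cons m w)
  show ?case
  proof (cases "m = n")
    case True then show ?thesis using Cons.prems by (simp add: comp_zero_left)
  next
    case False then have "n \<in> set w" using Cons.prems by simp
    then show ?thesis using Cons.IH Cons.prems by (simp add: comp_zero_right)
  qed
qed

context halph begin

lemma step_inv:
  assumes M1: "M [] = 1" and T: "\<forall>k k'. T k k' = exp (ldot lam (zmon k')) * EV M k k'"
  shows "\<exists>M'. M' [] = 1 \<and> (\<forall>k k'. op_comp (op_exp (Sgen lam T)) (op_comp T (op_exp (\<lambda>k k'. - Sgen lam T k k'))) k k'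
           = exp (ldot lam (zmon k')) * EV M' k k')"
proof -
  define M0 where "M0 w = M w - delta0 w" for w
  have M00: "M0 [] = 0" using M1 by (simp add: M0_def delta0_def)
  have NP: "nilpart lam T = EV M0"
  proof (intro ext)
    fix k k' :: "'i mon"
    have "T k k' * exp (- ldot lam (zmon k')) = EV M k k'"
      using T by (simp add: mult.commute[of _ "EV M k k'"] mult.assoc flip: exp_add)
    then show "nilpart lam T k k' = EV M0 k k'"
      unfolding nilpart_def flinv_comp M0_def ev_diff ev_delta0 by simp
  qed
  define P where "P = pser alog M0"
  have P0: "P [] = 0" by (simp add: P_def pser_Nil alog_def)
  have D: "Dcomp lam T = hom_comp (EV P)"
    unfolding Dcomp_def NP P_def ev_log1p[where M=M0, OF M00] by (intro ext) simp
  obtain MS where MS0: "MS [] = 0" and S: "Sgen lam T = EV MS"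
  proof (cases "\<exists>k\<ge>1. Nset lam T k \<noteq> {}")
    case True
    define K where "K = (LEAST k. 1 \<le> k \<and> Nset lam T k \<noteq> {})"
    define c where "c m = 1 - exp (ldot lam m)" for m
    have "Sgen lam T = (\<lambda>k k'. infsum (\<lambda>m. hom_comp (EV P) m k k' / c m) (Nset lam T K))"
      unfolding Sgen_def using True by (simp add: Let_def K_def c_def D)
    also have "\<dots> = EV (\<lambda>w. if sdeg w \<in> Nset lam T K then P w / c (sdeg w) else 0)"
      by (rule ev_sgen)
    finally have eq: "Sgen lam T = EV (\<lambda>w. if sdeg w \<in> Nset lam T K then P w / c (sdeg w) else 0)" .
    show ?thesis by (rule that[OF _ eq]) (simp add: P0)
  next
    case False
    have "Sgen lam T = op_zero" unfolding Sgen_def by (rule if_not_P[OF False])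
    then have "Sgen lam T = EV (\<lambda>w. 0)" unfolding ev_zero .
    then show ?thesis by (rule that[rotated]) simp
  qed
  define ME where "ME = pser aexp MS"
  define ME' where "ME' = pser aexp (\<lambda>w. - MS w)"
  have E: "op_exp (Sgen lam T) = EV ME"
    unfolding S ME_def by (rule ev_exp[where M=MS, OF MS0])
  have negS: "(\<lambda>k k'. - Sgen lam T k k') = EV (\<lambda>w. - MS w)"
    unfolding S using ev_scale[of "-1" MS] by (intro ext) simp
  have E': "op_exp (\<lambda>k k'. - Sgen lam T k k') = EV ME'"
    unfolding negS ME'_def by (rule ev_exp) (simp add: MS0)
  define Mh where "Mh w = exp (- ldot lam (sdeg w)) * ME w" for w
  define Mf where "Mf = mprod Mh (mprod M ME')"
  have Mf1: "Mf [] = 1"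
    by (simp add: Mf_def Mh_def mprod_Nil ME_def ME'_def pser_Nil aexp_def M1 sdeg_Nil ldot_zero)
  have Mh: "EV Mh a b = exp (ldot lam (zmon a) - ldot lam (zmon b)) * EV ME a b" for a b
    using fun_cong[OF fun_cong[OF ev_conj[of lam ME], of a], of b] unfolding Mh_def by simp
  have upT: "upper T"
    unfolding upper_def
  proof (intro allI impI)
    fix k k' assume "T k k' \<noteq> 0"
    then have "EV M k k' \<noteq> 0" using T by auto
    then show "mdeg k \<le> mdeg k'" using ev_upper unfolding upper_def by blast
  qed
  have "op_comp (EV ME) (op_comp T (EV ME')) k k' = exp (ldot lam (zmon k')) * EV Mf k k'" for k k'
  proof -
    define d where "d = mdeg k'"
    have "op_comp (EV ME) (op_comp T (EV ME')) k k'
        = (\<Sum>a\<in>Bd d. (\<Sum>b\<in>Bd (mdeg a). EV ME' k b * T b a) * EV ME a k')"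
      unfolding comp_fin[OF ev_upper] comp_fin[OF upT] d_def ..
    also have "\<dots> = (\<Sum>a\<in>Bd d. exp (ldot lam (zmon k')) *
         ((\<Sum>b\<in>Bd (mdeg a). EV ME' k b * EV M b a) * (exp (ldot lam (zmon a) - ldot lam (zmon k')) * EV ME a k')))"
    proof (rule sum.cong[OF refl])
      fix a
      define X where "X = (\<Sum>b\<in>Bd (mdeg a). EV ME' k b * EV M b a)"
      have 1: "(\<Sum>b\<in>Bd (mdeg a). EV ME' k b * T b a) = exp (ldot lam (zmon a)) * X"
        unfolding X_def using T by (simp add: sum_distrib_left mult_ac)
      have 2: "exp (ldot lam (zmon a)) = exp (ldot lam (zmon k')) * exp (ldot lam (zmon a) - ldot lam (zmon k'))"
        by (simp flip: exp_add)
      show "(\<Sum>b\<in>Bd (mdeg a). EV ME' k b * T b a) * EV ME a k' = exp (ldot lam (zmon k')) *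
         ((\<Sum>b\<in>Bd (mdeg a). EV ME' k b * EV M b a) * (exp (ldot lam (zmon a) - ldot lam (zmon k')) * EV ME a k'))"
        unfolding 1 X_def[symmetric] by (subst 2) (simp add: mult_ac)
    qed
    also have "\<dots> = exp (ldot lam (zmon k')) * (\<Sum>a\<in>Bd d. (\<Sum>b\<in>Bd (mdeg a). EV ME' k b * EV M b a) * EV Mh a k')"
      unfolding Mh sum_distrib_left ..
    also have "\<dots> = exp (ldot lam (zmon k')) * EV Mf k k'"
      unfolding Mf_def ev_mprod comp_fin[OF ev_upper] d_def ..
    finally show ?thesis .
  qed
  then show ?thesis using Mf1 unfolding E E' by blast
qed

end

lemma iter_inv:
  assumes sX: "supper X"
    and base: "\<exists>M. M [] = 1 \<and> (\<forall>k k'. T k k' = exp (ldot lam (zmon k')) * ev (hom_comp X) HL M k k')"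
  shows "\<exists>M. M [] = 1 \<and> (\<forall>k k'. poin_iter lam T r k k' = exp (ldot lam (zmon k')) * ev (hom_comp X) HL M k k')"
proof (induction r)
  case 0 then show ?case using base by simp
next
  case (Suc r)
  interpret H: halph "hom_comp X" by (rule hom_halph[OF sX])
  from Suc obtain M where "M [] = 1" "\<forall>k k'. poin_iter lam T r k k' = exp (ldot lam (zmon k')) * H.EV M k k'"
    by blast
  from H.step_inv[OF this] show ?case by simp
qed

lemma expands:
  assumes sX: "supper X"
    and T: "\<forall>k k'. T k k' = exp (ldot lam (zmon k')) * ev (hom_comp X) HL M k k'"
  shows "mould_expands lam T (hom_comp X) (add_closure {n. hom_comp X n \<noteq> op_zero}) M"
  unfolding mould_expands_def
proof (intro allI)
  fix k k' :: "'a mon"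
  interpret H: halph "hom_comp X" by (rule hom_halph[OF sX])
  define A where "A = add_closure {n. hom_comp X n \<noteq> op_zero}"
  define d where "d = mdeg k'"
  define f where "f w = exp (ldot lam (zmon k')) * (M w * word_op (hom_comp X) w k k')" for w
  have zA: "wop (hom_comp X) w = op_zero" if "w \<notin> lists A" for w
  proof -
    have "\<not> (\<forall>x\<in>set w. x \<in> A)" using that in_listsI by blast
    then obtain n where n: "n \<in> set w" "n \<notin> A" by blast
    have "hom_comp X n = op_zero"
    proof (rule ccontr)
      assume "hom_comp X n \<noteq> op_zero"
      then have "n \<in> A" unfolding A_def by (intro add_closure.base) simp
      with n(2) show False by simp
    qed
    then show ?thesis by (rule wop_zero[OF n(1)])
  qed
  have "(f has_sum (\<Sum>w\<in>Wset HL d \<inter> lists A. f w)) (lists A)"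
  proof (rule has_sum_finite_neutralI)
    show "finite (Wset HL d \<inter> lists A)" using H.finW by simp
    show "Wset HL d \<inter> lists A \<subseteq> lists A" by simp
    show "f w = 0" if "w \<in> lists A - Wset HL d \<inter> lists A" for w
    proof -
      have "w \<notin> Wset HL d" using that by blast
      then have "wop (hom_comp X) w k k' = 0" using H.wo_W d_def by blast
      then show ?thesis by (simp add: f_def word_op_wop)
    qed
  qed simp
  moreover have "(\<Sum>w\<in>Wset HL d \<inter> lists A. f w) = T k k'"
  proof -
    have "(\<Sum>w\<in>Wset HL d \<inter> lists A. f w) = (\<Sum>w\<in>Wset HL d. f w)"
    proof (rule sum.mono_neutral_left)
      show "finite (Wset HL d :: 'a deg list set)" using H.finW by simp
      show "\<forall>w\<in>Wset HL d - Wset HL d \<inter> lists A. f w = 0"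
      proof
        fix w assume "w \<in> Wset HL d - Wset HL d \<inter> lists A"
        then have "w \<notin> lists A" by simp
        then have "wop (hom_comp X) w = op_zero" by (rule zA)
        then show "f w = 0" by (simp add: f_def word_op_wop op_zero_def)
      qed
    qed auto
    also have "\<dots> = T k k'"
      unfolding f_def using T by (simp add: ev_def d_def word_op_wop sum_distrib_left)
    finally show ?thesis .
  qed
  ultimately show "((\<lambda>w. exp (ldot lam (zmon k')) * (M w * word_op (hom_comp X) w k k')) has_sum T k k')
          (lists (add_closure {n. hom_comp X n \<noteq> op_zero}))"
    unfolding f_def A_def by simp
qed

theorem mainTheorem9:
  fixes lam :: "'i::finite \<Rightarrow> complex" and h :: "'i \<Rightarrow> 'i ser" and r :: nat
  assumes h_order2: "\<forall>j p. mdeg p \<le> 1 \<longrightarrow> h j p = 0"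
    and h_analytic: "\<exists>C R. 0 < R \<and> (\<forall>j p. norm (h j p) \<le> C * R ^ mdeg p)"
  shows "\<exists>Poin poin.
    mould_expands lam (poin_iter lam (Fop lam h) r) (Dcomp lam (Fop lam h)) (calAset lam (Fop lam h)) Poin \<and>
    mould_expands lam (poin_iter lam (Fop lam h) r) (Bcomp lam (Fop lam h)) (Aset lam (Fop lam h)) poin"
proof -
  define F where "F = Fop lam h"
  define N where "N = nilpart lam F"
  define L where "L = op_log1p N"
  have sN: "supper N" unfolding N_def F_def by (rule nilpart_F_supper[OF h_order2])
  have sL: "supper L" unfolding L_def by (rule supper_log1p[OF sN])
  have Fe: "F k k' = exp (ldot lam (zmon k')) * (op_id k k' + N k k')" for k k'
  proof -
    have "N k k' = F k k' * exp (- ldot lam (zmon k')) - op_id k k'"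
      unfolding N_def nilpart_def flinv_comp ..
    then have "op_id k k' + N k k' = F k k' * exp (- ldot lam (zmon k'))" by simp
    then have "exp (ldot lam (zmon k')) * (op_id k k' + N k k') = F k k' * (exp (ldot lam (zmon k')) * exp (- ldot lam (zmon k')))"
      by (simp add: mult_ac)
    also have "\<dots> = F k k'" by (simp flip: exp_add)
    finally show ?thesis by simp
  qed
  have DC: "Dcomp lam F = hom_comp L" unfolding Dcomp_def L_def N_def by (intro ext) simp
  have BC: "Bcomp lam F = hom_comp N" unfolding Bcomp_def N_def by (intro ext) simp
  have baseD: "\<exists>M. M [] = 1 \<and> (\<forall>k k'. F k k' = exp (ldot lam (zmon k')) * ev (hom_comp L) HL M k k')"
  proof -
    interpret H: halph "hom_comp L" by (rule hom_halph[OF sL])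
    have s0: "single1 [] = 0" by (simp add: single1_def)
    have "H.EV (pser aexp single1) = op_exp L"
      using H.ev_exp[where M=single1, OF s0] ev_single[OF sL] by simp
    also have "\<dots> = (\<lambda>k k'. op_id k k' + N k k')" unfolding L_def by (rule exp_log1p[OF sN])
    finally have "H.EV (pser aexp single1) = (\<lambda>k k'. op_id k k' + N k k')" .
    moreover have "pser aexp single1 [] = 1" by (simp add: pser_Nil aexp_def)
    ultimately show ?thesis using Fe by (intro exI[of _ "pser aexp single1"]) simp
  qed
  have baseB: "\<exists>M. M [] = 1 \<and> (\<forall>k k'. F k k' = exp (ldot lam (zmon k')) * ev (hom_comp N) HL M k k')"
  proof -
    interpret H: halph "hom_comp N" by (rule hom_halph[OF sN])
    have "H.EV (\<lambda>w. delta0 w + single1 w) k k' = op_id k k' + N k k'" for k k'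
      unfolding H.ev_add H.ev_delta0 ev_single[OF sN] ..
    moreover have "delta0 [] + single1 [] = (1::complex)" by (simp add: delta0_def single1_def)
    ultimately show ?thesis using Fe by (intro exI[of _ "\<lambda>w. delta0 w + single1 w"]) simp
  qed
  obtain Poin where P: "\<forall>k k'. poin_iter lam F r k k' = exp (ldot lam (zmon k')) * ev (hom_comp L) HL Poin k k'"
    using iter_inv[OF sL baseD] by blast
  obtain poin where p: "\<forall>k k'. poin_iter lam F r k k' = exp (ldot lam (zmon k')) * ev (hom_comp N) HL poin k k'"
    using iter_inv[OF sN baseB] by blast
  have "mould_expands lam (poin_iter lam F r) (Dcomp lam F) (calAset lam F) Poin"
    unfolding calAset_def DC by (rule expands[OF sL P])
  moreover have "mould_expands lam (poin_iter lam F r) (Bcomp lam F) (Aset lam F) poin"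
    unfolding Aset_def BC by (rule expands[OF sN p])
  ultimately show ?thesis unfolding F_def by blast
qed


end
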